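(* Let $\mathbf{u}_j\in c_0$, $j\in\mathbb{N}_m$, be linearly independent, let $\mathcal{L}:\ell_1(\mathbb{N})\to\mathbb{R}^m$ be $\mathcal{L}(\mathbf{x}):=[\langle\mathbf{u}_j,\mathbf{x}\rangle:j\in\mathbb{N}_m]$, let $\mathbf{y}\in\mathbb{R}^m$ and $\mathcal{M}_{\mathbf{y}}:=\{\mathbf{x}\in\ell_1(\mathbb{N}):\mathcal{L}(\mathbf{x})=\mathbf{y}\}$. Then $\hat{\mathbf{x}}\in\ell_1(\mathbb{N})$ is a solution of $\inf\{\|\mathbf{x}\|_1:\mathbf{x}\in\mathcal{M}_{\mathbf{y}}\}$ if and only if $\hat{\mathbf{x}}\in\mathcal{M}_{\mathbf{y}}$ and there exist $c_j\in\mathbb{R}$, $j\in\mathbb{N}_m$, such that, with $\mathbf{u}:=\sum_{j\in\mathbb{N}_m}c_j\mathbf{u}_j$, $$\hat{\mathbf{x}}\in\|\mathbf{u}\|_\infty\,\mathrm{co}(\mathcal{V}(\mathbf{u})).$$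
   Context: $\ell_1(\mathbb{N})$ is the space of real sequences with $\|\mathbf{x}\|_1=\sum_j|x_j|<\infty$; $c_0$ is the space of real sequences tending to $0$ with norm $\|\mathbf{u}\|_\infty=\sup_j|u_j|$; $\langle\mathbf{u},\mathbf{x}\rangle:=\sum_{j\in\mathbb{N}}u_jx_j$. $\mathbb{N}_m:=\{1,\dots,m\}$. For $\mathbf{u}\in c_0$, $\mathbb{N}(\mathbf{u}):=\{j\in\mathbb{N}:|u_j|=\|\mathbf{u}\|_\infty\}$, and $\mathcal{V}(\mathbf{u}):=\{\mathrm{sign}(u_j)\mathbf{e}_j:j\in\mathbb{N}(\mathbf{u})\}$, where $\mathbf{e}_j$ is the $j$-th unit sequence. $\mathrm{co}(\mathcal{V})$ denotes the set of all finite convex combinations of elements of $\mathcal{V}$. *)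

theory Defs
  imports "HOL-Analysis.Analysis"
begin

definition ell1 :: "(nat \<Rightarrow> real) set" where
  "ell1 = {x. summable (\<lambda>j. \<bar>x j\<bar>)}"

definition c0 :: "(nat \<Rightarrow> real) set" where
  "c0 = {u. u \<longlonglongrightarrow> 0}"

definition norm1 :: "(nat \<Rightarrow> real) \<Rightarrow> real" where
  "norm1 x = (\<Sum>j. \<bar>x j\<bar>)"

definition supnorm :: "(nat \<Rightarrow> real) \<Rightarrow> real" where
  "supnorm u = (SUP j. \<bar>u j\<bar>)"

definition pairing :: "(nat \<Rightarrow> real) \<Rightarrow> (nat \<Rightarrow> real) \<Rightarrow> real" where
  "pairing u x = (\<Sum>j. u j * x j)"

definition unitseq :: "nat \<Rightarrow> nat \<Rightarrow> real" where
  "unitseq j = (\<lambda>k. if k = j then 1 else 0)"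

definition maxidx :: "(nat \<Rightarrow> real) \<Rightarrow> nat set" where
  "maxidx u = {j. \<bar>u j\<bar> = supnorm u}"

definition Vset :: "(nat \<Rightarrow> real) \<Rightarrow> (nat \<Rightarrow> real) set" where
  "Vset u = {(\<lambda>k. sgn (u j) * unitseq j k) | j. j \<in> maxidx u}"

definition co :: "(nat \<Rightarrow> real) set \<Rightarrow> (nat \<Rightarrow> real) set" where
  "co V = {x. \<exists>S w. finite S \<and> S \<subseteq> V \<and> (\<forall>v\<in>S. 0 \<le> w v) \<and> sum w S = 1
              \<and> x = (\<lambda>k. \<Sum>v\<in>S. w v * v k)}"

definition lin_indep_family :: "nat \<Rightarrow> (nat \<Rightarrow> nat \<Rightarrow> real) \<Rightarrow> bool" where
  "lin_indep_family m us \<longleftrightarrow>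
     (\<forall>c. (\<forall>k. (\<Sum>j\<in>{1..m}. c j * us j k) = 0) \<longrightarrow> (\<forall>j\<in>{1..m}. c j = 0))"

definition Mset :: "nat \<Rightarrow> (nat \<Rightarrow> nat \<Rightarrow> real) \<Rightarrow> (nat \<Rightarrow> real) \<Rightarrow> (nat \<Rightarrow> real) set" where
  "Mset m us y = {x \<in> ell1. \<forall>j\<in>{1..m}. pairing (us j) x = y j}"

end

theory Submission
  imports Defs
begin

lemma hb_step:
  fixes K :: "(nat \<Rightarrow> real) set" and N \<phi> \<psi> :: "(nat \<Rightarrow> real) \<Rightarrow> real"
  assumes Kadd: "\<And>x z. x\<in>K \<Longrightarrow> z\<in>K \<Longrightarrow> (\<lambda>k. x k + z k) \<in> K"
    and Ksc: "\<And>x t. x\<in>K \<Longrightarrow> (\<lambda>k. t * x k) \<in> K"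
    and Nadd: "\<And>x z. x\<in>K \<Longrightarrow> z\<in>K \<Longrightarrow> N (\<lambda>k. x k + z k) \<le> N x + N z"
    and Nsc: "\<And>x t. x\<in>K \<Longrightarrow> t \<ge> 0 \<Longrightarrow> N (\<lambda>k. t * x k) = t * N x"
    and padd: "\<And>x z. x\<in>K \<Longrightarrow> z\<in>K \<Longrightarrow> \<phi> (\<lambda>k. x k + z k) = \<phi> x + \<phi> z"
    and psc: "\<And>x t. x\<in>K \<Longrightarrow> \<phi> (\<lambda>k. t * x k) = t * \<phi> x"
    and qadd: "\<And>x z. x\<in>K \<Longrightarrow> z\<in>K \<Longrightarrow> \<psi> (\<lambda>k. x k + z k) = \<psi> x + \<psi> z"
    and qsc: "\<And>x t. x\<in>K \<Longrightarrow> \<psi> (\<lambda>k. t * x k) = t * \<psi> x"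
    and hyp: "\<And>x. x\<in>K \<Longrightarrow> \<psi> x = 0 \<Longrightarrow> \<phi> x \<le> N x"
  shows "\<exists>c. \<forall>x\<in>K. \<phi> x - c * \<psi> x \<le> N x"
proof -
  have key: "(\<phi> x - N x) / \<psi> x \<le> (N z - \<phi> z) / (- \<psi> z)"
    if x: "x\<in>K" "\<psi> x > 0" and z: "z\<in>K" "\<psi> z < 0" for x z
  proof -
    define s where "s = \<psi> x"
    define t where "t = - \<psi> z"
    have s: "s > 0" and t: "t > 0" using x z by (auto simp: s_def t_def)
    define x' where "x' = (\<lambda>k. (1/s) * x k)"
    define z' where "z' = (\<lambda>k. (1/t) * z k)"
    have x'K: "x' \<in> K" and z'K: "z' \<in> K" unfolding x'_def z'_def using Ksc x z by blast+
    have qx: "\<psi> x' = (1/s) * \<psi> x" unfolding x'_def by (rule qsc[OF x(1)])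
    have qz: "\<psi> z' = (1/t) * \<psi> z" unfolding z'_def by (rule qsc[OF z(1)])
    have px: "\<phi> x' = (1/s) * \<phi> x" unfolding x'_def by (rule psc[OF x(1)])
    have pz: "\<phi> z' = (1/t) * \<phi> z" unfolding z'_def by (rule psc[OF z(1)])
    have nx: "N x' = (1/s) * N x" unfolding x'_def by (rule Nsc[OF x(1)]) (use s in simp)
    have nz: "N z' = (1/t) * N z" unfolding z'_def by (rule Nsc[OF z(1)]) (use t in simp)
    have "\<psi> (\<lambda>k. x' k + z' k) = \<psi> x' + \<psi> z'" using qadd x'K z'K by blast
    also have "\<dots> = 0" using qx qz s t unfolding s_def t_def by simp
    finally have "\<phi> (\<lambda>k. x' k + z' k) \<le> N (\<lambda>k. x' k + z' k)" using hyp Kadd x'K z'K by blast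
    also have "\<dots> \<le> N x' + N z'" using Nadd x'K z'K by blast
    finally have "\<phi> x / s + \<phi> z / t \<le> N x / s + N z / t"
      using padd[OF x'K z'K] px pz nx nz by simp
    then have "(\<phi> x - N x) / s \<le> (N z - \<phi> z) / t" by (simp add: diff_divide_distrib)
    then show ?thesis by (simp add: s_def t_def)
  qed
  show ?thesis
  proof (cases "\<exists>x\<in>K. \<psi> x > 0")
    case True
    then obtain x0 where x0: "x0 \<in> K" "\<psi> x0 > 0" by blast
    define z0 where "z0 = (\<lambda>k. (-1) * x0 k)"
    have z0K: "z0 \<in> K" unfolding z0_def by (rule Ksc[OF x0(1)])
    have "\<psi> z0 = (-1) * \<psi> x0" unfolding z0_def by (rule qsc[OF x0(1)])
    then have z0: "z0 \<in> K" "\<psi> z0 < 0" using z0K x0(2) by auto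
    define A where "A = {(\<phi> x - N x) / \<psi> x | x. x\<in>K \<and> \<psi> x > 0}"
    have Ane: "A \<noteq> {}" using x0 by (auto simp: A_def)
    have Abdd: "bdd_above A" unfolding bdd_above_def A_def using key[OF _ _ z0] by blast
    show ?thesis
    proof (intro exI ballI)
      fix x assume xK: "x \<in> K"
      consider "\<psi> x > 0" | "\<psi> x < 0" | "\<psi> x = 0" by linarith
      then show "\<phi> x - Sup A * \<psi> x \<le> N x"
      proof cases
        case 1
        have "(\<phi> x - N x) / \<psi> x \<le> Sup A" using xK 1 by (intro cSup_upper Abdd) (auto simp: A_def)
        then show ?thesis using 1 by (simp add: pos_divide_le_eq algebra_simps)
      next
        case 2
        have "Sup A \<le> (N x - \<phi> x) / (- \<psi> x)"
          using Ane by (rule cSup_least) (use key xK 2 in \<open>auto simp: A_def\<close>)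
        then have "Sup A * (- \<psi> x) \<le> N x - \<phi> x" using 2 by (subst (asm) le_divide_eq) auto
        then show ?thesis by (simp add: algebra_simps)
      next
        case 3 then show ?thesis using hyp xK by simp
      qed
    qed
  next
    case False
    have "\<psi> x = 0" if "x \<in> K" for x
    proof (rule ccontr)
      assume "\<psi> x \<noteq> 0"
      moreover have "\<psi> (\<lambda>k. (-1) * x k) = (-1) * \<psi> x" by (rule qsc[OF that])
      ultimately show False using False that Ksc[OF that, of "-1"]
        by (metis linorder_neqE_linordered_idom mult_minus1 neg_0_less_iff_less)
    qed
    then show ?thesis using hyp by (intro exI[of _ 0]) auto
  qed
qed

lemma hb_finite:
  fixes X :: "(nat \<Rightarrow> real) set" and N :: "(nat \<Rightarrow> real) \<Rightarrow> real"
    and ls :: "nat \<Rightarrow> (nat \<Rightarrow> real) \<Rightarrow> real"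
  assumes fin: "finite J"
    and Xadd: "\<And>x z. x\<in>X \<Longrightarrow> z\<in>X \<Longrightarrow> (\<lambda>k. x k + z k) \<in> X"
    and Xsc: "\<And>x t. x\<in>X \<Longrightarrow> (\<lambda>k. t * x k) \<in> X"
    and Nadd: "\<And>x z. x\<in>X \<Longrightarrow> z\<in>X \<Longrightarrow> N (\<lambda>k. x k + z k) \<le> N x + N z"
    and Nsc: "\<And>x t. x\<in>X \<Longrightarrow> t \<ge> 0 \<Longrightarrow> N (\<lambda>k. t * x k) = t * N x"
    and ladd: "\<And>j x z. x\<in>X \<Longrightarrow> z\<in>X \<Longrightarrow> ls j (\<lambda>k. x k + z k) = ls j x + ls j z"
    and lsc: "\<And>j x t. x\<in>X \<Longrightarrow> ls j (\<lambda>k. t * x k) = t * ls j x"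
  shows "(\<And>x z. x\<in>X \<Longrightarrow> z\<in>X \<Longrightarrow> \<phi> (\<lambda>k. x k + z k) = \<phi> x + \<phi> z) \<Longrightarrow>
    (\<And>x t. x\<in>X \<Longrightarrow> \<phi> (\<lambda>k. t * x k) = t * \<phi> x) \<Longrightarrow>
    (\<And>x. x\<in>X \<Longrightarrow> (\<forall>j\<in>J. ls j x = 0) \<Longrightarrow> \<phi> x \<le> N x) \<Longrightarrow>
    \<exists>d. \<forall>x\<in>X. \<phi> x - (\<Sum>j\<in>J. d j * ls j x) \<le> N x"
  using fin
proof (induction J arbitrary: \<phi> rule: finite_induct)
  case empty
  then show ?case by auto
next
  case (insert a J)
  define K where "K = {x\<in>X. \<forall>j\<in>J. ls j x = 0}"
  have "\<exists>c. \<forall>x\<in>K. \<phi> x - c * ls a x \<le> N x"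
  proof (rule hb_step)
    show "\<And>x z. x\<in>K \<Longrightarrow> z\<in>K \<Longrightarrow> (\<lambda>k. x k + z k) \<in> K"
      using Xadd ladd by (auto simp: K_def)
    show "\<And>x t. x\<in>K \<Longrightarrow> (\<lambda>k. t * x k) \<in> K"
      using Xsc lsc by (auto simp: K_def)
  qed (use Nadd Nsc ladd lsc insert.prems in \<open>auto simp: K_def\<close>)
  then obtain c where c: "\<forall>x\<in>K. \<phi> x - c * ls a x \<le> N x" by blast
  have "\<exists>d. \<forall>x\<in>X. (\<phi> x - c * ls a x) - (\<Sum>j\<in>J. d j * ls j x) \<le> N x"
  proof (rule insert.IH)
    show "\<And>x z. x\<in>X \<Longrightarrow> z\<in>X \<Longrightarrow> \<phi> (\<lambda>k. x k + z k) - c * ls a (\<lambda>k. x k + z k) =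
        (\<phi> x - c * ls a x) + (\<phi> z - c * ls a z)"
      using insert.prems(1) ladd by (simp add: algebra_simps)
    show "\<And>x t. x\<in>X \<Longrightarrow> \<phi> (\<lambda>k. t * x k) - c * ls a (\<lambda>k. t * x k) = t * (\<phi> x - c * ls a x)"
      using insert.prems(2) lsc by (simp add: algebra_simps)
    show "\<And>x. x\<in>X \<Longrightarrow> (\<forall>j\<in>J. ls j x = 0) \<Longrightarrow> \<phi> x - c * ls a x \<le> N x"
      using c by (auto simp: K_def)
  qed
  then obtain d where d: "\<forall>x\<in>X. (\<phi> x - c * ls a x) - (\<Sum>j\<in>J. d j * ls j x) \<le> N x" by blast
  show ?case
  proof (intro exI[of _ "d(a:=c)"] ballI)
    fix x assume "x \<in> X"
    have "(\<Sum>j\<in>insert a J. (d(a:=c)) j * ls j x) = c * ls a x + (\<Sum>j\<in>J. d j * ls j x)"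
      using insert.hyps by (simp add: sum.insert) (intro sum.cong, auto)
    then show "\<phi> x - (\<Sum>j\<in>insert a J. (d(a:=c)) j * ls j x) \<le> N x" using d \<open>x \<in> X\<close> by auto
  qed
qed

lemma c0_bounded: "u \<in> c0 \<Longrightarrow> \<exists>B. \<forall>k. \<bar>u k\<bar> \<le> B"
proof -
  assume "u \<in> c0"
  then have "convergent u" unfolding c0_def by (auto intro: convergentI)
  then have "Bseq u" by (rule convergent_imp_Bseq)
  then obtain K where "\<forall>n. norm (u n) \<le> K" by (rule BseqE)
  then show ?thesis by auto
qed

lemma supnorm_upper: "\<forall>k. \<bar>u k\<bar> \<le> B \<Longrightarrow> \<bar>u k\<bar> \<le> supnorm u"
  unfolding supnorm_def
proof (rule cSUP_upper)
  assume "\<forall>k. \<bar>u k\<bar> \<le> B"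
  then show "bdd_above (range (\<lambda>k. \<bar>u k\<bar>))" by (intro bdd_aboveI2[where M=B]) blast
qed simp

lemma supnorm_least: "\<forall>k. \<bar>u k\<bar> \<le> B \<Longrightarrow> supnorm u \<le> B"
  unfolding supnorm_def by (rule cSUP_least) blast+

lemma summable_prod_abs: assumes "\<forall>k. \<bar>u k\<bar> \<le> B" "x \<in> ell1"
  shows "summable (\<lambda>k. \<bar>u k * x k\<bar>)"
proof (rule summable_comparison_test[where g="\<lambda>n. B * \<bar>x n\<bar>"])
  have "\<bar>u n * x n\<bar> \<le> B * \<bar>x n\<bar>" for n
    unfolding abs_mult using assms(1) by (intro mult_right_mono) auto
  then show "\<exists>N. \<forall>n\<ge>N. norm \<bar>u n * x n\<bar> \<le> B * \<bar>x n\<bar>" by simp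
  show "summable (\<lambda>n. B * \<bar>x n\<bar>)" using assms(2) unfolding ell1_def by (intro summable_mult) simp
qed

lemma summable_prod: "\<forall>k. \<bar>u k\<bar> \<le> B \<Longrightarrow> x \<in> ell1 \<Longrightarrow> summable (\<lambda>k. u k * x k)"
  by (rule summable_rabs_cancel[OF summable_prod_abs])

lemma ell1_add: "x \<in> ell1 \<Longrightarrow> z \<in> ell1 \<Longrightarrow> (\<lambda>k. x k + z k) \<in> ell1"
proof -
  assume "x \<in> ell1" "z \<in> ell1"
  then have s: "summable (\<lambda>j. \<bar>x j\<bar> + \<bar>z j\<bar>)" unfolding ell1_def by (intro summable_add) simp_all
  have "summable (\<lambda>j. \<bar>x j + z j\<bar>)"
    by (rule summable_comparison_test[OF _ s]) (simp add: abs_triangle_ineq)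
  then show ?thesis unfolding ell1_def by simp
qed

lemma ell1_sc: "x \<in> ell1 \<Longrightarrow> (\<lambda>k. t * x k) \<in> ell1"
  unfolding ell1_def by (simp add: abs_mult summable_mult)

lemma norm1_nonneg: "x \<in> ell1 \<Longrightarrow> 0 \<le> norm1 x"
  unfolding norm1_def ell1_def by (auto intro: suminf_nonneg)

lemma norm1_add: "x \<in> ell1 \<Longrightarrow> z \<in> ell1 \<Longrightarrow> norm1 (\<lambda>k. x k + z k) \<le> norm1 x + norm1 z"
proof -
  assume x: "x \<in> ell1" and z: "z \<in> ell1"
  have s1: "summable (\<lambda>k. \<bar>x k + z k\<bar>)" using ell1_add[OF x z] by (simp add: ell1_def)
  have sx: "summable (\<lambda>k. \<bar>x k\<bar>)" and sz: "summable (\<lambda>k. \<bar>z k\<bar>)" using x z by (simp_all add: ell1_def)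
  have s2: "summable (\<lambda>k. \<bar>x k\<bar> + \<bar>z k\<bar>)" using sx sz by (rule summable_add)
  have "norm1 (\<lambda>k. x k + z k) \<le> (\<Sum>k. \<bar>x k\<bar> + \<bar>z k\<bar>)"
    unfolding norm1_def by (rule suminf_le[OF _ s1 s2]) (rule abs_triangle_ineq)
  also have "\<dots> = norm1 x + norm1 z" unfolding norm1_def
    using suminf_add[OF sx sz] by simp
  finally show ?thesis .
qed

lemma norm1_sc: "x \<in> ell1 \<Longrightarrow> norm1 (\<lambda>k. t * x k) = \<bar>t\<bar> * norm1 x"
proof -
  assume x: "x \<in> ell1"
  have sx: "summable (\<lambda>k. \<bar>x k\<bar>)" using x by (simp add: ell1_def)
  have "norm1 (\<lambda>k. t * x k) = (\<Sum>k. \<bar>t\<bar> * \<bar>x k\<bar>)" unfolding norm1_def by (simp add: abs_mult)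
  also have "\<dots> = \<bar>t\<bar> * norm1 x" unfolding norm1_def using sx by (rule suminf_mult)
  finally show ?thesis .
qed

lemma pairing_add: "\<forall>k. \<bar>u k\<bar> \<le> B \<Longrightarrow> x \<in> ell1 \<Longrightarrow> z \<in> ell1 \<Longrightarrow>
    pairing u (\<lambda>k. x k + z k) = pairing u x + pairing u z"
  unfolding pairing_def using summable_prod[of u B x] summable_prod[of u B z]
  by (simp add: distrib_left suminf_add)

lemma pairing_sc: "\<forall>k. \<bar>u k\<bar> \<le> B \<Longrightarrow> x \<in> ell1 \<Longrightarrow>
    pairing u (\<lambda>k. t * x k) = t * pairing u x"
proof -
  assume a: "\<forall>k. \<bar>u k\<bar> \<le> B" "x \<in> ell1"
  have "pairing u (\<lambda>k. t * x k) = (\<Sum>k. t * (u k * x k))" unfolding pairing_def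
    by (simp add: algebra_simps)
  also have "\<dots> = t * pairing u x" unfolding pairing_def using summable_prod[OF a]
    by (rule suminf_mult)
  finally show ?thesis .
qed

lemma pairing_bound: "\<forall>k. \<bar>u k\<bar> \<le> B \<Longrightarrow> x \<in> ell1 \<Longrightarrow> pairing u x \<le> B * norm1 x"
proof -
  assume a: "\<forall>k. \<bar>u k\<bar> \<le> B" "x \<in> ell1"
  have "pairing u x \<le> (\<Sum>k. B * \<bar>x k\<bar>)" unfolding pairing_def
  proof (rule suminf_le)
    fix n
    have "u n * x n \<le> \<bar>u n\<bar> * \<bar>x n\<bar>" by (metis abs_ge_self abs_mult)
    also have "\<dots> \<le> B * \<bar>x n\<bar>" using a(1) by (intro mult_right_mono) auto
    finally show "u n * x n \<le> B * \<bar>x n\<bar>" .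
  next
    show "summable (\<lambda>n. u n * x n)" by (rule summable_prod[OF a])
    show "summable (\<lambda>n. B * \<bar>x n\<bar>)" using a(2) unfolding ell1_def by (intro summable_mult) simp
  qed
  also have "\<dots> = B * norm1 x" unfolding norm1_def using a(2) unfolding ell1_def by (intro suminf_mult) simp
  finally show ?thesis .
qed

lemma pairing_sum: assumes "finite J" "\<forall>j\<in>J. \<forall>k. \<bar>us j k\<bar> \<le> B j" "x \<in> ell1"
  shows "pairing (\<lambda>k. \<Sum>j\<in>J. c j * us j k) x = (\<Sum>j\<in>J. c j * pairing (us j) x)"
proof -
  have "pairing (\<lambda>k. \<Sum>j\<in>J. c j * us j k) x = (\<Sum>k. \<Sum>j\<in>J. c j * (us j k * x k))"
    unfolding pairing_def by (simp add: sum_distrib_right mult.assoc)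
  also have "\<dots> = (\<Sum>j\<in>J. \<Sum>k. c j * (us j k * x k))"
    by (rule suminf_sum) (use assms summable_prod in \<open>auto intro: summable_mult\<close>)
  also have "\<dots> = (\<Sum>j\<in>J. c j * pairing (us j) x)" unfolding pairing_def
  proof (rule sum.cong)
    fix j assume "j \<in> J"
    then have "summable (\<lambda>k. us j k * x k)" using assms summable_prod[of "us j" "B j" x] by blast
    then show "(\<Sum>k. c j * (us j k * x k)) = c j * (\<Sum>k. us j k * x k)" by (rule suminf_mult)
  qed simp
  finally show ?thesis .
qed

lemma unitseq_ell1: "unitseq j \<in> ell1"
  unfolding ell1_def unitseq_def by (auto intro: summable_finite[of "{j}"])

lemma pairing_unit: "pairing u (unitseq j) = u j"
  unfolding pairing_def unitseq_def by (subst suminf_finite[of "{j}"]) auto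

lemma norm1_unit: "norm1 (unitseq j) = 1"
  unfolding norm1_def unitseq_def by (subst suminf_finite[of "{j}"]) auto

lemma c0_sum: "finite J \<Longrightarrow> \<forall>j\<in>J. us j \<in> c0 \<Longrightarrow> (\<lambda>k. \<Sum>j\<in>J. c j * us j k) \<in> c0"
  unfolding c0_def by (auto intro!: tendsto_null_sum tendsto_mult_right_zero)


lemma reverse_dir:
  fixes m :: nat and us :: "nat \<Rightarrow> nat \<Rightarrow> real" and y :: "nat \<Rightarrow> real"
    and xh :: "nat \<Rightarrow> real" and c :: "nat \<Rightarrow> real"
  assumes c0s: "\<forall>j\<in>{1..m}. us j \<in> c0"
    and xhM: "xh \<in> Mset m us y"
    and u_def: "u = (\<lambda>k. \<Sum>j\<in>{1..m}. c j * us j k)"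
    and zco: "z \<in> co (Vset u)" and xhz: "xh = (\<lambda>k. supnorm u * z k)"
  shows "\<forall>x\<in>Mset m us y. norm1 xh \<le> norm1 x"
proof
  fix x assume xM: "x \<in> Mset m us y"
  define s where "s = supnorm u"
  have xh1: "xh \<in> ell1" and x1: "x \<in> ell1" using xhM xM by (auto simp: Mset_def)
  have "\<forall>j\<in>{1..m}. \<exists>B. \<forall>k. \<bar>us j k\<bar> \<le> B" using c0s c0_bounded by blast
  then obtain Bf where Bf: "\<forall>j\<in>{1..m}. \<forall>k. \<bar>us j k\<bar> \<le> Bf j" by metis
  have uc0: "u \<in> c0" unfolding u_def using c0s by (intro c0_sum) auto
  obtain Bu where Bu: "\<forall>k. \<bar>u k\<bar> \<le> Bu" using c0_bounded[OF uc0] by blast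
  have us: "\<forall>k. \<bar>u k\<bar> \<le> s" unfolding s_def using supnorm_upper[OF Bu] by blast
  have s0: "0 \<le> s" using us[rule_format, of 0] by linarith
  from zco obtain S w where S: "finite S" "S \<subseteq> Vset u" "\<forall>v\<in>S. 0 \<le> w v"
    and zS: "z = (\<lambda>k. \<Sum>v\<in>S. w v * v k)" unfolding co_def by blast
  have A: "v k = sgn (u k) * \<bar>v k\<bar>" and B: "\<bar>u k\<bar> * \<bar>v k\<bar> = s * \<bar>v k\<bar>" if "v \<in> S" for v k
  proof -
    from that S(2) obtain j where j: "j \<in> maxidx u" "v = (\<lambda>k. sgn (u j) * unitseq j k)"
      unfolding Vset_def by blast
    show "v k = sgn (u k) * \<bar>v k\<bar>" using j by (auto simp: unitseq_def abs_sgn sgn_mult)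
    show "\<bar>u k\<bar> * \<bar>v k\<bar> = s * \<bar>v k\<bar>" using j by (auto simp: unitseq_def maxidx_def s_def)
  qed
  define T where "T k = (\<Sum>v\<in>S. w v * \<bar>v k\<bar>)" for k
  have T0: "0 \<le> T k" for k unfolding T_def using S(3) by (intro sum_nonneg) auto
  have zT: "z k = sgn (u k) * T k" for k
  proof -
    have "z k = (\<Sum>v\<in>S. sgn (u k) * (w v * \<bar>v k\<bar>))" unfolding zS
      by (rule sum.cong) (use A in \<open>auto simp: algebra_simps\<close>)
    then show ?thesis unfolding T_def by (simp add: sum_distrib_left)
  qed
  have uT: "\<bar>u k\<bar> * T k = s * T k" for k
  proof -
    have "\<bar>u k\<bar> * T k = (\<Sum>v\<in>S. w v * (\<bar>u k\<bar> * \<bar>v k\<bar>))" unfolding T_def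
      by (simp add: sum_distrib_left algebra_simps)
    also have "\<dots> = (\<Sum>v\<in>S. w v * (s * \<bar>v k\<bar>))" by (rule sum.cong) (use B in auto)
    also have "\<dots> = s * T k" unfolding T_def by (simp add: sum_distrib_left algebra_simps)
    finally show ?thesis .
  qed
  have P: "u k * xh k = s * \<bar>xh k\<bar>" for k
  proof (cases "u k = 0")
    case True
    then have "s * T k = 0" using uT[of k] by simp
    then show ?thesis using True by (simp add: xhz zT s_def abs_mult)
  next
    case False
    have "u k * xh k = s * (\<bar>u k\<bar> * T k)" by (simp add: xhz zT s_def abs_mult_self_eq sgn_mult_abs algebra_simps)
      (metis abs_sgn mult.commute)
    also have "\<dots> = s * (s * T k)" using uT by simp
    also have "\<dots> = s * \<bar>xh k\<bar>"
    proof -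
      have "\<bar>xh k\<bar> = \<bar>s\<bar> * \<bar>sgn (u k)\<bar> * \<bar>T k\<bar>" by (simp add: xhz zT s_def abs_mult)
      also have "\<dots> = s * T k" using False s0 T0[of k] by (simp add: abs_sgn_eq)
      finally show ?thesis by simp
    qed
    finally show ?thesis .
  qed
  have "pairing u xh = (\<Sum>k. s * \<bar>xh k\<bar>)" unfolding pairing_def using P by simp
  also have "\<dots> = s * norm1 xh" unfolding norm1_def using xh1 unfolding ell1_def by (intro suminf_mult) simp
  finally have pxh: "pairing u xh = s * norm1 xh" .
  have "pairing u x = (\<Sum>j\<in>{1..m}. c j * pairing (us j) x)" unfolding u_def by (rule pairing_sum[OF _ Bf x1]) simp
  also have "\<dots> = (\<Sum>j\<in>{1..m}. c j * pairing (us j) xh)" using xM xhM by (simp add: Mset_def)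
  also have "\<dots> = pairing u xh" unfolding u_def by (rule pairing_sum[OF _ Bf xh1, symmetric]) simp
  finally have "pairing u x = s * norm1 xh" using pxh by simp
  moreover have "pairing u x \<le> s * norm1 x" by (rule pairing_bound[OF us x1])
  ultimately have le: "s * norm1 xh \<le> s * norm1 x" by simp
  show "norm1 xh \<le> norm1 x"
  proof (cases "s = 0")
    case True
    then have "xh = (\<lambda>k. 0)" using xhz s_def by simp
    then have "norm1 xh = 0" by (simp add: norm1_def)
    then show ?thesis using norm1_nonneg[OF x1] by simp
  next
    case False
    then show ?thesis using le s0 by (simp add: mult_le_cancel_left)
  qed
qed


lemma forward_dir:
  fixes m :: nat and us :: "nat \<Rightarrow> nat \<Rightarrow> real" and y :: "nat \<Rightarrow> real"
    and xh :: "nat \<Rightarrow> real"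
  assumes c0s: "\<forall>j\<in>{1..m}. us j \<in> c0"
    and xhM: "xh \<in> Mset m us y"
    and opt: "\<forall>x\<in>Mset m us y. norm1 xh \<le> norm1 x"
  shows "\<exists>c :: nat \<Rightarrow> real.
             let u = (\<lambda>k. \<Sum>j\<in>{1..m}. c j * us j k) in
             (\<exists>z\<in>co (Vset u). xh = (\<lambda>k. supnorm u * z k))"
proof -
  have xh1: "xh \<in> ell1" using xhM by (auto simp: Mset_def)
  define r where "r = norm1 xh"
  have r0: "0 \<le> r" unfolding r_def by (rule norm1_nonneg[OF xh1])
  have "\<forall>j\<in>{1..m}. \<exists>B. \<forall>k. \<bar>us j k\<bar> \<le> B" using c0s c0_bounded by blast
  then obtain Bf where Bf: "\<forall>j\<in>{1..m}. \<forall>k. \<bar>us j k\<bar> \<le> Bf j" by metis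
  show ?thesis
  proof (cases "r = 0")
    case True
    have sx: "summable (\<lambda>k. \<bar>xh k\<bar>)" using xh1 by (simp add: ell1_def)
    have "\<forall>k. \<bar>xh k\<bar> = 0" using True suminf_eq_zero_iff[OF sx] unfolding r_def norm1_def by simp
    then have xh0: "xh = (\<lambda>k. 0)" by auto
    define v0 where "v0 = (\<lambda>k. sgn ((\<lambda>k::nat. 0::real) 0) * unitseq 0 k)"
    have sup0: "supnorm (\<lambda>k. 0) = 0" by (simp add: supnorm_def)
    have "v0 \<in> Vset (\<lambda>k. 0)" unfolding Vset_def maxidx_def v0_def using sup0 by auto
    then have "(\<lambda>k. \<Sum>v\<in>{v0}. 1 * v k) \<in> co (Vset (\<lambda>k. 0))" unfolding co_def
      by (intro CollectI exI[of _ "{v0}"] exI[of _ "\<lambda>_. 1"]) auto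
    then show ?thesis
      by (intro exI[of _ "\<lambda>_. 0"]) (auto simp: Let_def sup0 xh0)
  next
    case False
    then have rpos: "r > 0" using r0 by simp
    have "\<exists>j0\<in>{1..m}. y j0 \<noteq> 0"
    proof (rule ccontr)
      assume "\<not> ?thesis"
      then have "(\<lambda>k. 0) \<in> Mset m us y" by (auto simp: Mset_def ell1_def pairing_def)
      then have "r \<le> norm1 (\<lambda>k. 0)" using opt r_def by blast
      then show False using rpos by (simp add: norm1_def)
    qed
    then obtain j0 where j0: "j0 \<in> {1..m}" "y j0 \<noteq> 0" by blast
    define y0 where "y0 = y j0"
    define P where "P j x = pairing (us j) x" for j x
    define \<phi> where "\<phi> x = r * P j0 x / y0" for x
    define ls where "ls j x = (if j \<in> {1..m} then y0 * P j x - y j * P j0 x else 0)" for j x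
    have Padd: "P j (\<lambda>k. x k + z k) = P j x + P j z" if "j \<in> {1..m}" "x \<in> ell1" "z \<in> ell1" for j x z
      unfolding P_def using that Bf by (intro pairing_add) auto
    have Psc: "P j (\<lambda>k. t * x k) = t * P j x" if "j \<in> {1..m}" "x \<in> ell1" for j x t
      unfolding P_def using that Bf by (intro pairing_sc) auto
    have "\<exists>d. \<forall>x\<in>ell1. \<phi> x - (\<Sum>j\<in>{1..m}. d j * ls j x) \<le> norm1 x"
    proof (rule hb_finite[where X=ell1 and N=norm1 and ls=ls])
      show "\<And>x z. x \<in> ell1 \<Longrightarrow> z \<in> ell1 \<Longrightarrow> (\<lambda>k. x k + z k) \<in> ell1" by (rule ell1_add)
      show "\<And>x t. x \<in> ell1 \<Longrightarrow> (\<lambda>k. t * x k) \<in> ell1" by (rule ell1_sc)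
      show "\<And>x z. x \<in> ell1 \<Longrightarrow> z \<in> ell1 \<Longrightarrow> norm1 (\<lambda>k. x k + z k) \<le> norm1 x + norm1 z" by (rule norm1_add)
      show "\<And>x t. x \<in> ell1 \<Longrightarrow> 0 \<le> t \<Longrightarrow> norm1 (\<lambda>k. t * x k) = t * norm1 x" by (simp add: norm1_sc)
      show "\<And>j x z. x \<in> ell1 \<Longrightarrow> z \<in> ell1 \<Longrightarrow> ls j (\<lambda>k. x k + z k) = ls j x + ls j z"
        unfolding ls_def using Padd j0(1) by (simp add: algebra_simps)
      show "\<And>j x t. x \<in> ell1 \<Longrightarrow> ls j (\<lambda>k. t * x k) = t * ls j x"
        unfolding ls_def using Psc j0(1) by (simp add: algebra_simps)
      show "\<And>x z. x \<in> ell1 \<Longrightarrow> z \<in> ell1 \<Longrightarrow> \<phi> (\<lambda>k. x k + z k) = \<phi> x + \<phi> z"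
        unfolding \<phi>_def using Padd j0(1) by (simp add: add_divide_distrib algebra_simps)
      show "\<And>x t. x \<in> ell1 \<Longrightarrow> \<phi> (\<lambda>k. t * x k) = t * \<phi> x"
        unfolding \<phi>_def using Psc j0(1) by simp
      show "\<phi> x \<le> norm1 x" if x1: "x \<in> ell1" and lz: "\<forall>j\<in>{1..m}. ls j x = 0" for x
      proof -
        define t where "t = P j0 x / y0"
        have y0: "y0 \<noteq> 0" using j0 by (simp add: y0_def)
        have Pj: "P j x = t * y j" if "j \<in> {1..m}" for j
          using lz that y0 unfolding ls_def t_def by (auto simp: field_simps)
        have phit: "\<phi> x = r * t" unfolding \<phi>_def t_def by simp
        show ?thesis
        proof (cases "t > 0")
          case False
          then show ?thesis using phit rpos norm1_nonneg[OF x1]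
            by (metis mult_nonneg_nonpos linorder_not_less order_trans r0)
        next
          case True
          define x' where "x' = (\<lambda>k. (1/t) * x k)"
          have x'1: "x' \<in> ell1" unfolding x'_def by (rule ell1_sc[OF x1])
          have "pairing (us j) x' = y j" if "j \<in> {1..m}" for j
            using Psc[OF that x1, of "1/t"] Pj[OF that] True unfolding x'_def P_def by simp
          then have "x' \<in> Mset m us y" using x'1 by (simp add: Mset_def)
          then have "r \<le> norm1 x'" using opt r_def by blast
          also have "\<dots> = norm1 x / t" unfolding x'_def using norm1_sc[OF x1, of "1/t"] True by simp
          finally show ?thesis using phit True by (simp add: pos_le_divide_eq mult.commute)
        qed
      qed
    qed simp
    then obtain d where d: "\<forall>x\<in>ell1. \<phi> x - (\<Sum>j\<in>{1..m}. d j * ls j x) \<le> norm1 x" by blast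
    have y0: "y0 \<noteq> 0" using j0 by (simp add: y0_def)
    define c where "c j = - d j * y0 + (if j = j0 then r / y0 + (\<Sum>i\<in>{1..m}. d i * y i) else 0)" for j
    define u where "u = (\<lambda>k. \<Sum>j\<in>{1..m}. c j * us j k)"
    have uc0: "u \<in> c0" unfolding u_def using c0s by (intro c0_sum) auto
    have G: "pairing u x = \<phi> x - (\<Sum>j\<in>{1..m}. d j * ls j x)" if x1: "x \<in> ell1" for x
    proof -
      define K where "K = r / y0 + (\<Sum>i\<in>{1..m}. d i * y i)"
      have e1: "pairing u x = (\<Sum>j\<in>{1..m}. c j * P j x)" unfolding u_def P_def
        by (rule pairing_sum[OF _ Bf x1]) simp
      have e2: "(\<Sum>j\<in>{1..m}. c j * P j x) = (\<Sum>j\<in>{1..m}. - (y0 * (d j * P j x)) +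
           (if j = j0 then K * P j0 x else 0))"
        unfolding c_def K_def by (rule sum.cong) (auto simp: algebra_simps)
      have e3: "(\<Sum>j\<in>{1..m}. - (y0 * (d j * P j x)) + (if j = j0 then K * P j0 x else 0)) =
           (\<Sum>j\<in>{1..m}. - (y0 * (d j * P j x))) + (\<Sum>j\<in>{1..m}. (if j = j0 then K * P j0 x else 0))"
        by (rule sum.distrib)
      have e4: "(\<Sum>j\<in>{1..m}. (if j = j0 then K * P j0 x else 0)) = K * P j0 x"
        using j0(1) by (subst sum.delta) auto
      have e5: "(\<Sum>j\<in>{1..m}. - (y0 * (d j * P j x))) = - (y0 * (\<Sum>j\<in>{1..m}. d j * P j x))"
        by (simp add: sum_negf sum_distrib_left)
      have e6: "(\<Sum>j\<in>{1..m}. d j * ls j x) = (\<Sum>j\<in>{1..m}. y0 * (d j * P j x) - P j0 x * (d j * y j))"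
        unfolding ls_def by (rule sum.cong) (auto simp: algebra_simps)
      have e7: "(\<Sum>j\<in>{1..m}. y0 * (d j * P j x) - P j0 x * (d j * y j)) =
          y0 * (\<Sum>j\<in>{1..m}. d j * P j x) - P j0 x * (\<Sum>i\<in>{1..m}. d i * y i)"
        by (simp add: sum_subtractf sum_distrib_left)
      have "pairing u x = - (y0 * (\<Sum>j\<in>{1..m}. d j * P j x)) + K * P j0 x"
        by (simp only: e1 e2 e3 e4 e5)
      then show ?thesis unfolding e6 e7 \<phi>_def K_def using y0
        by (simp add: field_simps)
    qed
    obtain Bu where Bu: "\<forall>k. \<bar>u k\<bar> \<le> Bu" using c0_bounded[OF uc0] by blast
    have ule: "\<bar>u k\<bar> \<le> 1" for k
    proof -
      have "u k = pairing u (unitseq k)" by (simp add: pairing_unit)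
      also have "\<dots> \<le> norm1 (unitseq k)" using G[OF unitseq_ell1] d unitseq_ell1 by simp
      finally have 1: "u k \<le> 1" by (simp add: norm1_unit)
      have e1: "(\<lambda>i. (-1) * unitseq k i) \<in> ell1" by (rule ell1_sc[OF unitseq_ell1])
      have "- u k = pairing u (\<lambda>i. (-1) * unitseq k i)"
        using pairing_sc[OF Bu unitseq_ell1, of "-1" k] by (simp add: pairing_unit)
      also have "\<dots> \<le> norm1 (\<lambda>i. (-1) * unitseq k i)" using G[OF e1] d e1 by simp
      also have "\<dots> = 1" using norm1_sc[OF unitseq_ell1, of "-1" k] by (simp add: norm1_unit)
      finally show ?thesis using 1 by simp
    qed
    have ub: "\<forall>k. \<bar>u k\<bar> \<le> 1" using ule by blast
    have Pxh: "P j xh = y j" if "j \<in> {1..m}" for j using xhM that by (simp add: Mset_def P_def)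
    have "pairing u xh = \<phi> xh - (\<Sum>j\<in>{1..m}. d j * ls j xh)" by (rule G[OF xh1])
    also have "(\<Sum>j\<in>{1..m}. d j * ls j xh) = 0"
    proof (rule sum.neutral, rule ballI)
      fix j assume "j \<in> {1..m}"
      then show "d j * ls j xh = 0" using Pxh[of j] Pxh[OF j0(1)] by (simp add: ls_def y0_def)
    qed
    also have "\<phi> xh = r" unfolding \<phi>_def using Pxh[OF j0(1)] y0 by (simp add: y0_def)
    finally have pxh: "pairing u xh = r" by simp
    have sa: "summable (\<lambda>k. \<bar>xh k\<bar>)" using xh1 by (simp add: ell1_def)
    have sp: "summable (\<lambda>k. u k * xh k)" by (rule summable_prod[OF ub xh1])
    have "(\<Sum>k. \<bar>xh k\<bar> - u k * xh k) = r - r"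
      using suminf_diff[OF sa sp] pxh unfolding r_def norm1_def pairing_def by simp
    moreover have nn: "0 \<le> \<bar>xh k\<bar> - u k * xh k" for k
    proof -
      have "u k * xh k \<le> \<bar>u k\<bar> * \<bar>xh k\<bar>" by (metis abs_ge_self abs_mult)
      also have "\<dots> \<le> 1 * \<bar>xh k\<bar>" using ule by (intro mult_right_mono) auto
      finally show ?thesis by simp
    qed
    ultimately have pw: "u k * xh k = \<bar>xh k\<bar>" for k
      using suminf_eq_zero_iff[OF summable_diff[OF sa sp]] nn by simp
    define F where "F = {k. \<bar>u k\<bar> = 1}"
    obtain N where N: "\<forall>n\<ge>N. norm (u n - 0) < 1" using LIMSEQ_D[of u 0 1] uc0 by (auto simp: c0_def)
    have finF: "finite F"
    proof (rule finite_subset[of F "{..<N}"])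
      show "F \<subseteq> {..<N}" using N by (force simp: F_def not_less[symmetric])
    qed simp
    have supp: "k \<in> F" if "xh k \<noteq> 0" for k
    proof -
      have "\<bar>xh k\<bar> \<le> \<bar>u k\<bar> * \<bar>xh k\<bar>" using pw[of k] by (metis abs_ge_self abs_mult)
      then have "1 \<le> \<bar>u k\<bar>" using that by simp
      then show ?thesis using ule[of k] by (simp add: F_def)
    qed
    have sgnrep: "xh k = sgn (u k) * \<bar>xh k\<bar>" for k
    proof (cases "xh k = 0")
      case False
      then have "\<bar>u k\<bar> = 1" using supp F_def by simp
      then have "u k = 1 \<or> u k = -1" by linarith
      then show ?thesis
      proof
        assume "u k = 1" then show ?thesis using pw[of k] by simp
      next
        assume h: "u k = -1"
        have "(-1) * xh k = \<bar>xh k\<bar>" using pw[of k] unfolding h .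
        moreover have s: "sgn (u k) = -1" using h by simp
        ultimately show ?thesis unfolding s by linarith
      qed
    qed simp
    obtain k0 where k0: "xh k0 \<noteq> 0"
    proof (rule ccontr)
      assume "\<not> thesis"
      then have "xh = (\<lambda>k. 0)" using that by auto
      then show False using rpos r_def by (simp add: norm1_def)
    qed
    define c' where "c' j = r * c j" for j
    define u' where "u' = (\<lambda>k. \<Sum>j\<in>{1..m}. c' j * us j k)"
    have u'u: "u' k = r * u k" for k unfolding u'_def u_def c'_def by (simp add: sum_distrib_left mult.assoc)
    have su': "supnorm u' = r"
    proof (rule antisym)
      have b: "\<forall>k. \<bar>u' k\<bar> \<le> r" using ule rpos by (simp add: u'u abs_mult mult_left_le)
      then show "supnorm u' \<le> r" by (rule supnorm_least)
      have "\<bar>u' k0\<bar> = r" using supp[OF k0] rpos by (simp add: u'u abs_mult F_def)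
      then show "r \<le> supnorm u'" using supnorm_upper[OF b, of k0] by simp
    qed
    have maxF: "maxidx u' = F" unfolding maxidx_def F_def su' using rpos by (auto simp: u'u abs_mult)
    have sgnu': "sgn (u' k) = sgn (u k)" for k using rpos by (simp add: u'u sgn_mult)
    define f where "f j = (\<lambda>k. sgn (u' j) * unitseq j k)" for j
    define S where "S = f ` F"
    have injf: "inj_on f F"
    proof (rule inj_onI)
      fix a b assume ab: "a \<in> F" "b \<in> F" "f a = f b"
      have "f a a = sgn (u a)" using sgnu' by (simp add: f_def unitseq_def)
      moreover have "sgn (u a) \<noteq> 0" using ab(1) by (auto simp: F_def sgn_0_0)
      moreover have "f b a = 0" if "a \<noteq> b" using that by (simp add: f_def unitseq_def)
      ultimately show "a = b" using ab(3) by metis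
    qed
    define w where "w v = \<bar>xh (inv_into F f v)\<bar> / r" for v
    have wf: "w (f j) = \<bar>xh j\<bar> / r" if "j \<in> F" for j
      unfolding w_def using inv_into_f_f[OF injf that] by simp
    have n1: "norm1 xh = (\<Sum>j\<in>F. \<bar>xh j\<bar>)" unfolding norm1_def
      by (rule suminf_finite[OF finF]) (use supp in auto)
    have sumw: "sum w S = 1"
    proof -
      have "sum w S = (\<Sum>j\<in>F. w (f j))" unfolding S_def by (simp add: sum.reindex[OF injf])
      also have "\<dots> = (\<Sum>j\<in>F. \<bar>xh j\<bar> / r)" by (rule sum.cong) (auto simp: wf)
      also have "\<dots> = norm1 xh / r" unfolding n1 by (simp add: sum_divide_distrib)
      finally show ?thesis using rpos r_def by simp
    qed
    define z where "z = (\<lambda>k. \<Sum>v\<in>S. w v * v k)"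
    have zk: "z k = (if k \<in> F then \<bar>xh k\<bar> / r * sgn (u k) else 0)" for k
    proof -
      have "z k = (\<Sum>j\<in>F. w (f j) * f j k)" unfolding z_def S_def by (simp add: sum.reindex[OF injf])
      also have "\<dots> = (\<Sum>j\<in>F. if k = j then \<bar>xh k\<bar> / r * sgn (u k) else 0)"
      proof (rule sum.cong)
        fix j assume jF: "j \<in> F"
        have fj: "f j k = (if k = j then sgn (u k) else 0)" by (simp add: f_def unitseq_def sgnu')
        show "w (f j) * f j k = (if k = j then \<bar>xh k\<bar> / r * sgn (u k) else 0)"
          unfolding fj wf[OF jF] by simp
      qed simp
      also have "\<dots> = (if k \<in> F then \<bar>xh k\<bar> / r * sgn (u k) else 0)" by (rule sum.delta'[OF finF])
      finally show ?thesis .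
    qed
    have zco: "z \<in> co (Vset u')"
      unfolding co_def
    proof (intro CollectI exI conjI)
      show "finite S" unfolding S_def using finF by simp
      show "S \<subseteq> Vset u'" unfolding S_def Vset_def maxF f_def by blast
      show "\<forall>v\<in>S. 0 \<le> w v" unfolding w_def using rpos by simp
      show "sum w S = 1" by (rule sumw)
      show "z = (\<lambda>k. \<Sum>v\<in>S. w v * v k)" by (rule z_def)
    qed
    have "xh = (\<lambda>k. supnorm u' * z k)"
    proof
      fix k show "xh k = supnorm u' * z k"
      proof (cases "k \<in> F")
        case True
        then have "supnorm u' * z k = sgn (u k) * \<bar>xh k\<bar>" using rpos by (simp add: su' zk)
        then show ?thesis using sgnrep[of k] by simp
      next
        case False
        then show ?thesis using supp[of k] by (auto simp: su' zk)
      qed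
    qed
    then show ?thesis using zco unfolding Let_def u'_def by blast
  qed
qed

theorem mainTheorem8:
  fixes m :: nat and us :: "nat \<Rightarrow> nat \<Rightarrow> real" and y :: "nat \<Rightarrow> real"
    and xh :: "nat \<Rightarrow> real"
  assumes "\<forall>j\<in>{1..m}. us j \<in> c0"
    and "lin_indep_family m us"
    and "xh \<in> ell1"
  shows "(xh \<in> Mset m us y \<and> (\<forall>x\<in>Mset m us y. norm1 xh \<le> norm1 x)) \<longleftrightarrow>
         (xh \<in> Mset m us y \<and>
          (\<exists>c :: nat \<Rightarrow> real.
             let u = (\<lambda>k. \<Sum>j\<in>{1..m}. c j * us j k) in
             (\<exists>z\<in>co (Vset u). xh = (\<lambda>k. supnorm u * z k))))"
proof
  assume h: "xh \<in> Mset m us y \<and> (\<forall>x\<in>Mset m us y. norm1 xh \<le> norm1 x)"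
  then show "xh \<in> Mset m us y \<and>
          (\<exists>c :: nat \<Rightarrow> real.
             let u = (\<lambda>k. \<Sum>j\<in>{1..m}. c j * us j k) in
             (\<exists>z\<in>co (Vset u). xh = (\<lambda>k. supnorm u * z k)))"
    using forward_dir[OF assms(1)] by blast
next
  assume h: "xh \<in> Mset m us y \<and>
          (\<exists>c :: nat \<Rightarrow> real.
             let u = (\<lambda>k. \<Sum>j\<in>{1..m}. c j * us j k) in
             (\<exists>z\<in>co (Vset u). xh = (\<lambda>k. supnorm u * z k)))"
  then obtain c z where xhM: "xh \<in> Mset m us y"
    and z: "z \<in> co (Vset (\<lambda>k. \<Sum>j\<in>{1..m}. c j * us j k))"
    and xz: "xh = (\<lambda>k. supnorm (\<lambda>k. \<Sum>j\<in>{1..m}. c j * us j k) * z k)"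
    unfolding Let_def by blast
  show "xh \<in> Mset m us y \<and> (\<forall>x\<in>Mset m us y. norm1 xh \<le> norm1 x)"
    using xhM reverse_dir[OF assms(1) xhM refl z xz] by blast
qed

end
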